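(* Let $e=(e_1,\dots,e_n)\in\mathbf{I}_n(201,210)$ have parameters $(p,q)$. Then there are exactly $p+q$ sequences $(e_1,\dots,e_n,k)\in\mathbf{I}_{n+1}(201,210)$, and their parameters are, as a multiset, $$(p,q+1),(p-1,q+2),\dots,(1,q+p),\ (p+1,q),\ \underbrace{(p+2,1),\dots,(p+2,1)}_{q-1}.$$
   Context: $\mathbf{I}_n=\{(e_1,\dots,e_n)\in\mathbb{N}^n:0\le e_i<i\}$. $\mathbf{I}_n(201,210)$ is the set of $e\in\mathbf{I}_n$ with no indices $i<j<k$ such that $e_j<e_k<e_i$ and no indices $i<j<k$ such that $e_i>e_j>e_k$. The parameters of $e\in\mathbf{I}_n(201,210)$ are $(p,q)$ where $p=|\{k>e_n:(e_1,\dots,e_n,k)\in\mathbf{I}_{n+1}(201,210)\}|$ and $q=|\{k\le e_n:(e_1,\dots,e_n,k)\in\mathbf{I}_{n+1}(201,210)\}|$. *)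

theory Defs
  imports Main "HOL-Library.Multiset"
begin

text \<open>Inversion sequences, stored as 0-indexed lists: the paper's e_i (1-indexed)
  is e ! (i - 1), and the condition 0 \<le> e_i < i becomes e ! j < Suc j.\<close>
definition Iseq :: "nat \<Rightarrow> nat list set" where
  "Iseq n = {e. length e = n \<and> (\<forall>j<n. e ! j < Suc j)}"

definition avoids_201_210 :: "nat list \<Rightarrow> bool" where
  "avoids_201_210 e \<longleftrightarrow>
     \<not> (\<exists>i j k. i < j \<and> j < k \<and> k < length e \<and> e ! j < e ! k \<and> e ! k < e ! i) \<and>
     \<not> (\<exists>i j k. i < j \<and> j < k \<and> k < length e \<and> e ! i > e ! j \<and> e ! j > e ! k)"

definition Iav :: "nat \<Rightarrow> nat list set" where
  "Iav n = {e \<in> Iseq n. avoids_201_210 e}"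

definition param_p :: "nat list \<Rightarrow> nat" where
  "param_p e = card {k. k > last e \<and> e @ [k] \<in> Iav (Suc (length e))}"

definition param_q :: "nat list \<Rightarrow> nat" where
  "param_q e = card {k. k \<le> last e \<and> e @ [k] \<in> Iav (Suc (length e))}"

end

theory Submission
  imports Defs
begin

definition good :: "nat list \<Rightarrow> nat \<Rightarrow> bool" where
  "good e x \<longleftrightarrow> (\<forall>i j. i < j \<and> j < length e \<and> e!j < e!i \<longrightarrow> x = e!j \<or> e!i \<le> x)"

lemma avoidsD:
  assumes "avoids_201_210 x" "i < j" "j < l" "l < length x"
  shows "\<not> (x!j < x!l \<and> x!l < x!i)" "\<not> (x!i > x!j \<and> x!j > x!l)"
  using assms unfolding avoids_201_210_def by blast+

lemma Iav_snoc:
  assumes "e \<in> Iav n"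
  shows "e @ [k] \<in> Iav (Suc n) \<longleftrightarrow> k \<le> n \<and> good e k"
proof -
  have len: "length e = n" and bd: "\<forall>j<n. e!j < Suc j" and av: "avoids_201_210 e"
    using assms by (auto simp: Iav_def Iseq_def)
  have nth1: "\<And>i. i < n \<Longrightarrow> (e@[k])!i = e!i" using len by (simp add: nth_append)
  have nth2: "(e@[k])!n = k" using len by (simp add: nth_append)
  show ?thesis
  proof
    assume h: "e @ [k] \<in> Iav (Suc n)"
    have bd2: "\<forall>j<Suc n. (e@[k])!j < Suc j" and av2: "avoids_201_210 (e@[k])"
      using h by (auto simp: Iav_def Iseq_def)
    have "k \<le> n" using bd2[rule_format, of n] nth2 by simp
    moreover have "good e k"
      unfolding good_def
    proof (intro allI impI)
      fix i j assume ij: "i < j \<and> j < length e \<and> e!j < e!i"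
      have "\<not> ((e@[k])!j < (e@[k])!n \<and> (e@[k])!n < (e@[k])!i)"
        "\<not> ((e@[k])!i > (e@[k])!j \<and> (e@[k])!j > (e@[k])!n)"
        using avoidsD[OF av2, of i j n] ij len by auto
      then show "k = e!j \<or> e!i \<le> k" using ij len nth1 nth2 by auto
    qed
    ultimately show "k \<le> n \<and> good e k" by simp
  next
    assume h: "k \<le> n \<and> good e k"
    have "\<forall>j<Suc n. (e@[k])!j < Suc j"
    proof (intro allI impI)
      fix j assume "j < Suc n"
      then consider "j < n" | "j = n" by linarith
      then show "(e@[k])!j < Suc j" using bd nth1 nth2 h by cases auto
    qed
    moreover have "avoids_201_210 (e@[k])"
      unfolding avoids_201_210_def
    proof (intro conjI notI)
      assume "\<exists>i j l. i < j \<and> j < l \<and> l < length (e@[k]) \<and> (e@[k])!j < (e@[k])!l \<and> (e@[k])!l < (e@[k])!i"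
      then obtain i j l where *: "i < j" "j < l" "l < Suc n" "(e@[k])!j < (e@[k])!l" "(e@[k])!l < (e@[k])!i"
        using len by auto
      show False
      proof (cases "l < n")
        case True
        then have "e!j < e!l" "e!l < e!i" using * nth1 by auto
        then show False using avoidsD(1)[OF av \<open>i<j\<close> \<open>j<l\<close>] True len by simp
      next
        case False
        then have "l = n" using * by simp
        then have "e!j < k" "k < e!i" using * nth1 nth2 by auto
        then show False using h \<open>i<j\<close> \<open>j<l\<close> \<open>l = n\<close> len unfolding good_def by force
      qed
    next
      assume "\<exists>i j l. i < j \<and> j < l \<and> l < length (e@[k]) \<and> (e@[k])!i > (e@[k])!j \<and> (e@[k])!j > (e@[k])!l"
      then obtain i j l where *: "i < j" "j < l" "l < Suc n" "(e@[k])!i > (e@[k])!j" "(e@[k])!j > (e@[k])!l"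
        using len by auto
      show False
      proof (cases "l < n")
        case True
        then have "e!i > e!j" "e!j > e!l" using * nth1 by auto
        then show False using avoidsD(2)[OF av \<open>i<j\<close> \<open>j<l\<close>] True len by simp
      next
        case False
        then have "l = n" using * by simp
        then have "e!i > e!j" "e!j > k" using * nth1 nth2 by auto
        then show False using h \<open>i<j\<close> \<open>j<l\<close> \<open>l = n\<close> len unfolding good_def by force
      qed
    qed
    ultimately show "e @ [k] \<in> Iav (Suc n)" using len by (simp add: Iav_def Iseq_def)
  qed
qed

lemma good_snoc:
  "good (e@[k]) x \<longleftrightarrow> good e x \<and> (\<forall>i<length e. k < e!i \<longrightarrow> x = k \<or> e!i \<le> x)"
proof
  assume h: "good (e@[k]) x"
  have h': "\<And>i j. i < j \<Longrightarrow> j < Suc (length e) \<Longrightarrow> (e@[k])!j < (e@[k])!i \<Longrightarrow> x = (e@[k])!j \<or> (e@[k])!i \<le> x"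
    using h unfolding good_def by simp
  show "good e x \<and> (\<forall>i<length e. k < e!i \<longrightarrow> x = k \<or> e!i \<le> x)"
  proof
    show "good e x" unfolding good_def
    proof (intro allI impI)
      fix i j assume ij: "i < j \<and> j < length e \<and> e!j < e!i"
      then have "(e@[k])!j = e!j" "(e@[k])!i = e!i" by (auto simp: nth_append)
      then show "x = e!j \<or> e!i \<le> x" using h'[of i j] ij by simp
    qed
    show "\<forall>i<length e. k < e!i \<longrightarrow> x = k \<or> e!i \<le> x"
    proof (intro allI impI)
      fix i assume "i < length e" "k < e!i"
      moreover then have "(e@[k])!(length e) = k" "(e@[k])!i = e!i" by (auto simp: nth_append)
      ultimately show "x = k \<or> e!i \<le> x" using h'[of i "length e"] by simp
    qed
  qed
next
  assume h: "good e x \<and> (\<forall>i<length e. k < e!i \<longrightarrow> x = k \<or> e!i \<le> x)"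
  show "good (e@[k]) x" unfolding good_def
  proof (intro allI impI)
    fix i j assume ij: "i < j \<and> j < length (e@[k]) \<and> (e@[k])!j < (e@[k])!i"
    show "x = (e@[k])!j \<or> (e@[k])!i \<le> x"
    proof (cases "j < length e")
      case True
      then have "(e@[k])!j = e!j" "(e@[k])!i = e!i" using ij by (auto simp: nth_append)
      moreover have "x = e!j \<or> e!i \<le> x" using h ij True calculation unfolding good_def by auto
      ultimately show ?thesis by simp
    next
      case False
      then have "j = length e" using ij by simp
      then have "(e@[k])!j = k" "(e@[k])!i = e!i" using ij by (auto simp: nth_append)
      then show ?thesis using ij h \<open>j = length e\<close> by auto
    qed
  qed
qed

lemma le_Max_nth: "i < length e \<Longrightarrow> e!i \<le> Max (set e)"
  by (simp add: Max_ge)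

lemma Max_nth_ex: "e \<noteq> [] \<Longrightarrow> \<exists>m<length e. e!m = Max (set e)"
  by (metis Max_in List.finite_set in_set_conv_nth set_empty)

lemma good_ge: "Max (set e) \<le> x \<Longrightarrow> good e x"
  unfolding good_def using le_Max_nth by (meson le_trans less_imp_le_nat less_trans)

lemma good_snoc_ge: "Max (set e) \<le> k \<Longrightarrow> good (e@[k]) x = good e x"
  unfolding good_snoc using le_Max_nth by (meson le_trans not_le)

lemma good_snoc_lt:
  assumes "e \<noteq> []" "k < Max (set e)" "good e k"
  shows "good (e@[k]) x = (x = k \<or> Max (set e) \<le> x)"
proof
  assume "good (e@[k]) x"
  then have h: "\<forall>i<length e. k < e!i \<longrightarrow> x = k \<or> e!i \<le> x" unfolding good_snoc by simp
  obtain m where "m < length e" "e!m = Max (set e)" using Max_nth_ex[OF assms(1)] by blast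
  then show "x = k \<or> Max (set e) \<le> x" using h assms(2) by metis
next
  assume "x = k \<or> Max (set e) \<le> x"
  then show "good (e@[k]) x"
  proof
    assume "x = k" then show ?thesis unfolding good_snoc using assms(3) by simp
  next
    assume "Max (set e) \<le> x" then show ?thesis unfolding good_snoc using good_ge le_Max_nth
      by (meson le_trans)
  qed
qed

lemma good_last:
  assumes "e \<in> Iav n" "e \<noteq> []"
  shows "good e (last e)"
proof -
  have len: "length e = n" and av: "avoids_201_210 e"
    using assms by (auto simp: Iav_def Iseq_def)
  have lst: "last e = e!(n-1)" using assms(2) len by (simp add: last_conv_nth)
  show ?thesis unfolding good_def
  proof (intro allI impI)
    fix i j assume ij: "i < j \<and> j < length e \<and> e!j < e!i"
    show "last e = e!j \<or> e!i \<le> last e"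
    proof (cases "j = n - 1")
      case True then show ?thesis using lst by simp
    next
      case False
      then have "j < n - 1" using ij len by arith
      then have "\<not> (e!j < e!(n-1) \<and> e!(n-1) < e!i)" "\<not> (e!i > e!j \<and> e!j > e!(n-1))"
        using avoidsD[OF av, of i j "n-1"] ij len by auto
      then show ?thesis using lst ij by auto
    qed
  qed
qed

lemma last_le_Max: "e \<noteq> [] \<Longrightarrow> last e \<le> Max (set e)"
  by (simp add: Max_ge)

lemma good_last_lt:
  assumes "e \<noteq> []" "last e < Max (set e)" "good e x"
  shows "x = last e \<or> Max (set e) \<le> x"
proof -
  obtain m where m: "m < length e" "e!m = Max (set e)" using Max_nth_ex[OF assms(1)] by blast
  have lst: "last e = e!(length e - 1)" using assms(1) by (simp add: last_conv_nth)
  have "m \<noteq> length e - 1" using m lst assms(2) by auto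
  then have "m < length e - 1" using m by simp
  then show ?thesis using assms(3) m lst assms unfolding good_def
    by (metis diff_less less_numeral_extra(1) length_greater_0_conv)
qed

lemma Max_lt:
  assumes "e \<in> Iav n" "e \<noteq> []"
  shows "Max (set e) < n"
proof -
  obtain m where m: "m < length e" "e!m = Max (set e)" using Max_nth_ex[OF assms(2)] by blast
  have "length e = n" "\<forall>j<n. e!j < Suc j" using assms by (auto simp: Iav_def Iseq_def)
  then show ?thesis using m by fastforce
qed

theorem lemma4p5:
  fixes e :: "nat list" and n p q :: nat
  assumes "n \<ge> 1" and "e \<in> Iav n"
    and "p = param_p e" and "q = param_q e"
  shows "card {k. e @ [k] \<in> Iav (Suc n)} = p + q \<and>
         image_mset (\<lambda>k. (param_p (e @ [k]), param_q (e @ [k])))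
                    (mset_set {k. e @ [k] \<in> Iav (Suc n)})
         = mset (map (\<lambda>i. (p - i, q + 1 + i)) [0..<p]) + {#(p + 1, q)#}
           + replicate_mset (q - 1) (p + 2, 1)"
proof -
  have len: "length e = n" using assms(2) by (simp add: Iav_def Iseq_def)
  have ne: "e \<noteq> []" using len assms(1) by auto
  define W where "W = Max (set e)"
  define c where "c = last e"
  define A where "A = {k. k \<le> n \<and> good e k}"
  have WN: "W < n" unfolding W_def using Max_lt[OF assms(2) ne] .
  have cW: "c \<le> W" unfolding W_def c_def using last_le_Max[OF ne] .
  have cA: "c \<in> A" unfolding A_def c_def using good_last[OF assms(2) ne] cW WN c_def by auto
  have gge: "\<And>x. W \<le> x \<Longrightarrow> good e x" unfolding W_def using good_ge by blast
  have Aeq: "{k. e @ [k] \<in> Iav (Suc n)} = A" unfolding A_def using Iav_snoc[OF assms(2)] by blast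
  have finA: "finite A" unfolding A_def by simp
  define L where "L = (if W \<le> c then Suc c else W)"
  have gt: "{k\<in>A. c < k} = {L..n}"
  proof (cases "W \<le> c")
    case True
    then show ?thesis unfolding L_def A_def using gge by auto
  next
    case False
    then have "c < W" by simp
    then have "\<And>x. good e x \<Longrightarrow> x = c \<or> W \<le> x" using good_last_lt[OF ne] unfolding W_def c_def by blast
    then show ?thesis unfolding L_def A_def using gge False by force
  qed
  define B where "B = {k\<in>A. k < c}"
  have finB: "finite B" unfolding B_def using finA by simp
  have Bempty: "c < W \<Longrightarrow> B = {}"
    using good_last_lt[OF ne] unfolding B_def A_def W_def c_def by fastforce
  have "A = {k\<in>A. c < k} \<union> ({c} \<union> B)" using cA unfolding B_def by auto
  then have Asplit: "A = {L..n} \<union> ({c} \<union> B)" unfolding gt .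
  have gt': "\<And>x. (x \<in> A \<and> c < x) = (L \<le> x \<and> x \<le> n)" proof -
    fix x
    have "x \<in> {k\<in>A. c < k} \<longleftrightarrow> x \<in> {L..n}" unfolding gt ..
    then show "(x \<in> A \<and> c < x) = (L \<le> x \<and> x \<le> n)" by simp
  qed
  have Lgt: "\<And>x. x \<in> {L..n} \<Longrightarrow> c < x" using gt' by (meson atLeastAtMost_iff)
  have disj: "{L..n} \<inter> ({c} \<union> B) = {}" using Lgt unfolding B_def by fastforce
  have le_c: "{k\<in>A. k \<le> c} = insert c B" using cA unfolding B_def by auto
  have hp: "p = Suc n - L"
  proof -
    have "{k. k > last e \<and> e @ [k] \<in> Iav (Suc (length e))} = {k\<in>A. c < k}"
      using Aeq len c_def by auto
    then show ?thesis using assms(3) gt by (simp add: param_p_def)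
  qed
  have hq: "q = Suc (card B)"
  proof -
    have "{k. k \<le> last e \<and> e @ [k] \<in> Iav (Suc (length e))} = {k\<in>A. k \<le> c}"
      using Aeq len c_def by auto
    then show ?thesis using assms(4) le_c finB unfolding B_def param_q_def by simp
  qed
  have cardA: "card A = p + q"
  proof -
    have "card A = card {L..n} + card ({c} \<union> B)"
      unfolding Asplit by (rule card_Un_disjoint) (use disj finB in auto)
    also have "card ({c} \<union> B) = Suc (card B)" using finB unfolding B_def by simp
    finally show ?thesis using hp hq by simp
  qed
  have pp: "param_p (e@[k]) = card {x. k < x \<and> x \<le> Suc n \<and> good (e@[k]) x}"
    and qq: "param_q (e@[k]) = card {x. x \<le> k \<and> x \<le> Suc n \<and> good (e@[k]) x}"
    if "k \<in> A" for k
  proof -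
    have "e@[k] \<in> Iav (Suc n)" using that Aeq by blast
    note I = Iav_snoc[OF this]
    show "param_p (e@[k]) = card {x. k < x \<and> x \<le> Suc n \<and> good (e@[k]) x}"
      unfolding param_p_def using I len by simp
    show "param_q (e@[k]) = card {x. x \<le> k \<and> x \<le> Suc n \<and> good (e@[k]) x}"
      unfolding param_q_def using I len by simp
  qed
  have par_ge: "(param_p (e@[k]), param_q (e@[k])) = (Suc n - k, q + (Suc k - L))"
    if "k \<in> {L..n}" for k
  proof -
    have kA: "k \<in> A" using that gt by blast
    have Wk: "W \<le> k" using that unfolding L_def by (auto split: if_splits)
    have g: "\<And>x. good (e@[k]) x = good e x" using good_snoc_ge Wk unfolding W_def by blast
    have "{x. k < x \<and> x \<le> Suc n \<and> good (e@[k]) x} = {Suc k..Suc n}"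
      using g gge Wk by auto
    moreover have "{x. x \<le> k \<and> x \<le> Suc n \<and> good (e@[k]) x} = insert c B \<union> {L..k}"
    proof -
      have "{x. x \<le> k \<and> x \<le> Suc n \<and> good (e@[k]) x} = {x\<in>A. x \<le> c} \<union> {x\<in>A. c < x \<and> x \<le> k}"
        using g that Lgt[OF that] unfolding A_def by auto
      also have "{x\<in>A. c < x \<and> x \<le> k} = {L..k}"
      proof (rule set_eqI)
        fix x show "x \<in> {x\<in>A. c < x \<and> x \<le> k} \<longleftrightarrow> x \<in> {L..k}"
          using gt'[of x] that by auto
      qed
      finally show ?thesis using le_c by simp
    qed
    moreover have "card (insert c B \<union> {L..k}) = q + (Suc k - L)"
    proof -
      have "insert c B \<inter> {L..k} = {}" using Lgt that unfolding B_def by fastforce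
      moreover have "finite (insert c B)" "finite {L..k}" using finB by auto
      ultimately have "card (insert c B \<union> {L..k}) = card (insert c B) + card {L..k}"
        using card_Un_disjoint by blast
      then show ?thesis using hq finB unfolding B_def by simp
    qed
    ultimately show ?thesis using pp[OF kA] qq[OF kA] by simp
  qed
  have par_lt: "(param_p (e@[k]), param_q (e@[k])) = (Suc (Suc n) - W, 1)"
    if "k \<in> A" "k < W" for k
  proof -
    have kA: "good e k" "k \<le> n" using that(1) unfolding A_def by auto
    have g: "\<And>x. good (e@[k]) x = (x = k \<or> W \<le> x)"
      using good_snoc_lt[OF ne _ kA(1)] that(2) unfolding W_def by blast
    have s1: "{x. k < x \<and> x \<le> Suc n \<and> good (e@[k]) x} = {W..Suc n}"
    proof (rule set_eqI)
      fix x show "x \<in> {x. k < x \<and> x \<le> Suc n \<and> good (e@[k]) x} \<longleftrightarrow> x \<in> {W..Suc n}"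
        using g[of x] that(2) by auto
    qed
    have s2: "{x. x \<le> k \<and> x \<le> Suc n \<and> good (e@[k]) x} = {k}"
    proof (rule set_eqI)
      fix x show "x \<in> {x. x \<le> k \<and> x \<le> Suc n \<and> good (e@[k]) x} \<longleftrightarrow> x \<in> {k}"
        using g[of x] that(2) kA(2) by auto
    qed
    show ?thesis using pp[OF that(1)] qq[OF that(1)] s1 s2 by simp
  qed
  have par_c: "(param_p (e@[c]), param_q (e@[c])) = (p + 1, q)"
  proof (cases "W \<le> c")
    case True
    have g: "\<And>x. good (e@[c]) x = good e x" using good_snoc_ge True unfolding W_def by blast
    have s1: "{x. c < x \<and> x \<le> Suc n \<and> good (e@[c]) x} = {Suc c..Suc n}"
    proof (rule set_eqI)
      fix x show "x \<in> {x. c < x \<and> x \<le> Suc n \<and> good (e@[c]) x} \<longleftrightarrow> x \<in> {Suc c..Suc n}"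
        using g[of x] gge[of x] True by auto
    qed
    have s2: "{x. x \<le> c \<and> x \<le> Suc n \<and> good (e@[c]) x} = {k\<in>A. k \<le> c}"
    proof (rule set_eqI)
      fix x show "x \<in> {x. x \<le> c \<and> x \<le> Suc n \<and> good (e@[c]) x} \<longleftrightarrow> x \<in> {k\<in>A. k \<le> c}"
        using g[of x] WN cW unfolding A_def by auto
    qed
    have "c = W" using True cW by simp
    then have "p = n - c" using hp True unfolding L_def by simp
    moreover have "c < n" using WN cW by simp
    moreover have "c \<notin> B" unfolding B_def by simp
    ultimately show ?thesis using pp[OF cA] qq[OF cA] s1 s2 le_c hq finB by (simp add: Suc_diff_le)
  next
    case False
    then have cw: "c < W" by simp
    have "p = Suc n - W" using hp False unfolding L_def by simp
    moreover have "q = 1" using hq Bempty[OF cw] by simp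
    ultimately show ?thesis using par_lt[OF cA cw] WN by simp
  qed
  have mA: "mset_set A = mset_set {L..n} + {#c#} + mset_set B"
  proof -
    have "mset_set A = mset_set {L..n} + mset_set ({c} \<union> B)"
      unfolding Asplit by (rule mset_set_Union) (use disj finB in auto)
    also have "mset_set ({c} \<union> B) = {#c#} + mset_set B"
      using finB by (subst mset_set_Union) (auto simp: B_def)
    finally show ?thesis by (simp add: add.assoc)
  qed
  define f where "f = (\<lambda>k. (param_p (e @ [k]), param_q (e @ [k])))"
  have m1: "image_mset f (mset_set {L..n}) = mset (map (\<lambda>i. (p - i, q + 1 + i)) [0..<p])"
  proof -
    have LS: "L \<le> Suc n" using WN cW unfolding L_def by auto
    have e1: "mset_set {L..n} = mset [L..<Suc n]"
      unfolding mset_upt atLeastLessThanSuc_atLeastAtMost ..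
    have e2: "[L..<Suc n] = map (\<lambda>i. i + L) [0..<p]"
      unfolding map_add_upt using hp LS by simp
    have e3: "map (f \<circ> (\<lambda>i. i + L)) [0..<p] = map (\<lambda>i. (p - i, q + 1 + i)) [0..<p]"
    proof (rule map_cong[OF refl])
      fix i assume "i \<in> set [0..<p]"
      then have "i < p" by simp
      then have "i + L \<in> {L..n}" using hp LS by auto
      then have "f (i + L) = (Suc n - (i + L), q + (Suc (i + L) - L))"
        using par_ge[of "i + L"] unfolding f_def by blast
      then show "(f \<circ> (\<lambda>i. i + L)) i = (p - i, q + 1 + i)"
        using hp by simp
    qed
    have "image_mset f (mset_set {L..n}) = mset (map f [L..<Suc n])"
      unfolding e1 by (rule mset_map[symmetric])
    also have "\<dots> = mset (map (\<lambda>i. (p - i, q + 1 + i)) [0..<p])"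
      unfolding e2 map_map e3 ..
    finally show ?thesis .
  qed
  have m3: "image_mset f (mset_set B) = replicate_mset (q - 1) (p + 2, 1)"
  proof (cases "W \<le> c")
    case True
    have "image_mset f (mset_set B) = image_mset (\<lambda>_. (p + 2, 1)) (mset_set B)"
    proof (rule image_mset_cong)
      fix k assume "k \<in># mset_set B"
      then have "k \<in> A" "k < W" using finB True cW unfolding B_def by auto
      have "c = W" using True cW by simp
      then have "p = n - W" using hp True unfolding L_def by simp
      then have "Suc (Suc n) - W = p + 2" using WN by simp
      then show "f k = (p + 2, 1)" using par_lt[OF \<open>k \<in> A\<close> \<open>k < W\<close>] unfolding f_def by simp
    qed
    then show ?thesis using hq by (simp add: image_mset_const_eq)
  next
    case False
    then show ?thesis using Bempty hq by simp
  qed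
  have fc: "f c = (p + 1, q)" using par_c unfolding f_def .
  have img: "image_mset f (mset_set A) = mset (map (\<lambda>i. (p - i, q + 1 + i)) [0..<p]) + {#(p + 1, q)#}
           + replicate_mset (q - 1) (p + 2, 1)"
    by (simp only: mA image_mset_union image_mset_single m1 m3 fc)
  show ?thesis unfolding Aeq using conjI[OF cardA img[unfolded f_def]] .
qed

end
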